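(* If $X$ is a minimal dendric shift over $\mathcal{A}$ that is planar for the pair of total orders $(\le^L,\le^R)$, then $G^L(X)=G(\le^L)$ and $G^R(X)=G(\le^R)$.
   Context: Shift spaces over a finite alphabet $\mathcal{A}$: nonempty closed shift-invariant $X\subseteq\mathcal{A}^{\mathbb{Z}}$, language $\mathcal{L}(X)$ containing all letters, $\mathcal{L}_n(X)$ its words of length $n$; minimal if no nonempty proper closed invariant subset. $E^L_X(w)=\{a:aw\in\mathcal{L}(X)\}$, $E^R_X(w)=\{b:wb\in\mathcal{L}(X)\}$, $E_X(w)=\{(a,b):awb\in\mathcal{L}(X)\}$; $\mathcal{E}_X(w)$ bipartite graph on disjoint copies of $E^L_X(w),E^R_X(w)$ with edges $E_X(w)$; $X$ dendric if every $\mathcal{E}_X(w)$ is a tree. $X$ is planar for $(\le^L,\le^R)$ if for every $w\in\mathcal{L}(X)$ and all $(a_1,b_1),(a_2,b_2)\in E_X(w)$, $a_1<^La_2$ implies $b_1\le^Rb_2$. Multi-clique $G(\{C_1,\dots,C_k\})$ on $\mathcal{A}$: every pair of distinct elements of $C_i$ joined by an edge of color $c_i$, colors distinct; colored multigraphs identified up to bijection of colors. For a dendric (or eventually dendric) shift there is $N$ such that for $n\ge N$ the multi-clique built from the family $(E^L_X(v))_{v\in\mathcal{L}_n(X)}$ does not depend on $n$; this is $G^L(X)$; $G^R(X)$ is defined likewise from right extensions. For a total order $\le$ with $c_1<c_2<\dots<c_n$ the letters of $\mathcal{A}$, $G(\le)$ is the graph on $\mathcal{A}$ whose edges are $\{c_i,c_{i+1}\}$,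 $i<n$, each with its own color. *)

theory Defs
  imports Main
begin

(* Points of A^Z are functions int => 'a; the alphabet is the finite type 'a (A = UNIV). *)

definition shift :: "(int \<Rightarrow> 'a) \<Rightarrow> int \<Rightarrow> 'a" where
  "shift x = (\<lambda>i. x (i + 1))"

(* closedness in the product of discrete topologies: x belongs to X whenever
   every central cylinder of x meets X *)
definition closed_sh :: "(int \<Rightarrow> 'a) set \<Rightarrow> bool" where
  "closed_sh X \<longleftrightarrow>
     (\<forall>x. (\<forall>n::nat. \<exists>y\<in>X. \<forall>i. \<bar>i\<bar> \<le> int n \<longrightarrow> y i = x i) \<longrightarrow> x \<in> X)"

definition lang :: "(int \<Rightarrow> 'a) set \<Rightarrow> 'a list set" where
  "lang X = {w. \<exists>x\<in>X. \<exists>i. w = map (\<lambda>j. x (i + int j)) [0..<length w]}"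

definition lang_n :: "(int \<Rightarrow> 'a) set \<Rightarrow> nat \<Rightarrow> 'a list set" where
  "lang_n X n = {w \<in> lang X. length w = n}"

definition shift_space :: "(int \<Rightarrow> 'a) set \<Rightarrow> bool" where
  "shift_space X \<longleftrightarrow> X \<noteq> {} \<and> closed_sh X \<and> shift ` X = X \<and> (\<forall>a. [a] \<in> lang X)"

definition minimal_shift :: "(int \<Rightarrow> 'a) set \<Rightarrow> bool" where
  "minimal_shift X \<longleftrightarrow> shift_space X \<and>
     (\<forall>Y. Y \<subseteq> X \<and> Y \<noteq> {} \<and> closed_sh Y \<and> shift ` Y = Y \<longrightarrow> Y = X)"

definition ext_L :: "(int \<Rightarrow> 'a) set \<Rightarrow> 'a list \<Rightarrow> 'a set" where
  "ext_L X w = {a. a # w \<in> lang X}"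

definition ext_R :: "(int \<Rightarrow> 'a) set \<Rightarrow> 'a list \<Rightarrow> 'a set" where
  "ext_R X w = {b. w @ [b] \<in> lang X}"

definition ext :: "(int \<Rightarrow> 'a) set \<Rightarrow> 'a list \<Rightarrow> ('a \<times> 'a) set" where
  "ext X w = {(a, b). a # w @ [b] \<in> lang X}"

(* extension graph: bipartite graph on disjoint copies (Inl / Inr) of E^L(w), E^R(w) *)
definition ext_vertices :: "(int \<Rightarrow> 'a) set \<Rightarrow> 'a list \<Rightarrow> ('a + 'a) set" where
  "ext_vertices X w = Inl ` ext_L X w \<union> Inr ` ext_R X w"

definition ext_adj :: "(int \<Rightarrow> 'a) set \<Rightarrow> 'a list \<Rightarrow> ('a + 'a) \<Rightarrow> ('a + 'a) \<Rightarrow> bool" where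
  "ext_adj X w u v \<longleftrightarrow> (\<exists>a b. (a, b) \<in> ext X w \<and>
      ((u = Inl a \<and> v = Inr b) \<or> (u = Inr b \<and> v = Inl a)))"

definition is_tree :: "'v set \<Rightarrow> ('v \<Rightarrow> 'v \<Rightarrow> bool) \<Rightarrow> bool" where
  "is_tree V adj \<longleftrightarrow> V \<noteq> {} \<and>
     (\<forall>u\<in>V. \<forall>v\<in>V. adj\<^sup>*\<^sup>* u v) \<and>
     \<not> (\<exists>cs. 3 \<le> length cs \<and> distinct cs \<and> set cs \<subseteq> V \<and>
            (\<forall>i < length cs. adj (cs ! i) (cs ! ((i + 1) mod length cs))))"

definition dendric :: "(int \<Rightarrow> 'a) set \<Rightarrow> bool" where
  "dendric X \<longleftrightarrow> (\<forall>w \<in> lang X. is_tree (ext_vertices X w) (ext_adj X w))"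

definition planar :: "(int \<Rightarrow> 'a) set \<Rightarrow> 'a rel \<Rightarrow> 'a rel \<Rightarrow> bool" where
  "planar X rL rR \<longleftrightarrow> (\<forall>w \<in> lang X. \<forall>a1 b1 a2 b2.
      (a1, b1) \<in> ext X w \<longrightarrow> (a2, b2) \<in> ext X w \<longrightarrow>
      (a1, a2) \<in> rL \<and> a1 \<noteq> a2 \<longrightarrow> (b1, b2) \<in> rR)"

(* edge-coloured multigraphs on the alphabet: sets of (colour, edge) with edge = {a,b}, a \<noteq> b *)
definition multi_clique :: "'c set \<Rightarrow> ('c \<Rightarrow> 'a set) \<Rightarrow> ('c \<times> 'a set) set" where
  "multi_clique I C = {(c, {a, b}) | c a b. c \<in> I \<and> a \<in> C c \<and> b \<in> C c \<and> a \<noteq> b}"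

definition cgraph_iso :: "('c \<times> 'a set) set \<Rightarrow> ('d \<times> 'a set) set \<Rightarrow> bool" where
  "cgraph_iso G H \<longleftrightarrow> (\<exists>f. bij_betw f (fst ` G) (fst ` H) \<and> H = (\<lambda>(c, e). (f c, e)) ` G)"

definition GL_is :: "(int \<Rightarrow> 'a) set \<Rightarrow> ('c \<times> 'a set) set \<Rightarrow> bool" where
  "GL_is X G \<longleftrightarrow> (\<exists>N. \<forall>n\<ge>N. cgraph_iso (multi_clique (lang_n X n) (ext_L X)) G)"

definition GR_is :: "(int \<Rightarrow> 'a) set \<Rightarrow> ('c \<times> 'a set) set \<Rightarrow> bool" where
  "GR_is X G \<longleftrightarrow> (\<exists>N. \<forall>n\<ge>N. cgraph_iso (multi_clique (lang_n X n) (ext_R X)) G)"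

definition order_enum :: "'a rel \<Rightarrow> 'a list" where
  "order_enum r = (THE cs. distinct cs \<and> set cs = UNIV \<and> sorted_wrt (\<lambda>x y. (x, y) \<in> r) cs)"

definition order_graph :: "'a rel \<Rightarrow> (nat \<times> 'a set) set" where
  "order_graph r = (let cs = order_enum r in
     {(i, {cs ! i, cs ! Suc i}) | i. Suc i < length cs})"

end

theory Submission
  imports Defs
begin

lemma lang_iff: "w \<in> lang X \<longleftrightarrow> (\<exists>x\<in>X. \<exists>i. \<forall>j<length w. w ! j = x (i + int j))"
proof
  assume "w \<in> lang X"
  then show "\<exists>x\<in>X. \<exists>i. \<forall>j<length w. w ! j = x (i + int j)"
  proof -
    from \<open>w \<in> lang X\<close> obtain x i where "x \<in> X" "w = map (\<lambda>j. x (i + int j)) [0..<length w]"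
      unfolding lang_def by blast
    then have "\<forall>j<length w. w ! j = x (i + int j)" by (metis add_0 diff_zero nth_map_upt)
    then show ?thesis using \<open>x \<in> X\<close> by blast
  qed
next
  assume "\<exists>x\<in>X. \<exists>i. \<forall>j<length w. w ! j = x (i + int j)"
  then obtain x i where "x \<in> X" "\<forall>j<length w. w ! j = x (i + int j)" by blast
  then have "w = map (\<lambda>j. x (i + int j)) [0..<length w]" by (intro nth_equalityI) auto
  then show "w \<in> lang X" unfolding lang_def using \<open>x \<in> X\<close> by blast
qed

lemma lang_app1: "u @ v \<in> lang X \<Longrightarrow> u \<in> lang X"
proof -
  assume "u @ v \<in> lang X"
  then obtain x i where x: "x \<in> X" "\<forall>j<length (u@v). (u@v) ! j = x (i + int j)"
    unfolding lang_iff by blast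
  have "\<forall>j<length u. u ! j = x (i + int j)"
  proof (intro allI impI)
    fix j assume "j < length u"
    then show "u ! j = x (i + int j)" using x(2)[rule_format, of j] by (simp add: nth_append)
  qed
  then show ?thesis using x(1) unfolding lang_iff by blast
qed

lemma lang_app2: "u @ v \<in> lang X \<Longrightarrow> v \<in> lang X"
proof -
  assume "u @ v \<in> lang X"
  then obtain x i where x: "x \<in> X" "\<forall>j<length (u@v). (u@v) ! j = x (i + int j)"
    unfolding lang_iff by blast
  have "\<forall>j<length v. v ! j = x ((i + int (length u)) + int j)"
  proof (intro allI impI)
    fix j assume "j < length v"
    then have "(u@v) ! (length u + j) = x (i + int (length u + j))" using x(2)[rule_format, of "length u + j"] by simp
    moreover have "i + int (length u + j) = (i + int (length u)) + int j" by simp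
    ultimately show "v ! j = x ((i + int (length u)) + int j)" by (simp add: nth_append add.assoc)
  qed
  then show ?thesis using x(1) unfolding lang_iff by blast
qed

lemma lang_Cons: "a # w \<in> lang X \<Longrightarrow> w \<in> lang X"
  using lang_app2[of "[a]" w] by simp

lemma lang_snoc: "w @ [a] \<in> lang X \<Longrightarrow> w \<in> lang X"
  using lang_app1 by blast

lemma lang_mid: "u @ v @ s \<in> lang X \<Longrightarrow> v \<in> lang X"
  using lang_app1 lang_app2 by blast

lemma lang_extL: "w \<in> lang X \<Longrightarrow> \<exists>a. a # w \<in> lang X"
proof -
  assume "w \<in> lang X"
  then obtain x i where x: "x \<in> X" "\<forall>j<length w. w ! j = x (i + int j)"
    unfolding lang_iff by blast
  have "\<forall>j<length (x (i - 1) # w). (x (i - 1) # w) ! j = x ((i - 1) + int j)"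
  proof (intro allI impI)
    fix j assume "j < length (x (i - 1) # w)"
    then show "(x (i - 1) # w) ! j = x ((i - 1) + int j)"
      using x(2) by (cases j) auto
  qed
  then show ?thesis using x(1) unfolding lang_iff by blast
qed

lemma lang_extR: "w \<in> lang X \<Longrightarrow> \<exists>b. w @ [b] \<in> lang X"
proof -
  assume "w \<in> lang X"
  then obtain x i where x: "x \<in> X" "\<forall>j<length w. w ! j = x (i + int j)"
    unfolding lang_iff by blast
  have "\<forall>j<length (w @ [x (i + int (length w))]). (w @ [x (i + int (length w))]) ! j = x (i + int j)"
    using x(2) by (auto simp: nth_append less_Suc_eq)
  then show ?thesis using x(1) unfolding lang_iff by blast
qed

lemma lang_extR_n: "w \<in> lang X \<Longrightarrow> \<exists>s. length s = n \<and> w @ s \<in> lang X"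
proof (induction n)
  case 0 then show ?case by auto
next
  case (Suc n)
  then obtain s where "length s = n" "w @ s \<in> lang X" by blast
  then obtain b where "(w @ s) @ [b] \<in> lang X" using lang_extR by blast
  then show ?case using \<open>length s = n\<close> by (intro exI[of _ "s @ [b]"]) auto
qed

lemma lang_Nil: "X \<noteq> {} \<Longrightarrow> [] \<in> lang X"
  unfolding lang_iff by auto

lemma finite_lang_n: "finite (lang_n X n :: ('a::finite) list set)"
proof -
  have "lang_n X n \<subseteq> {xs. set xs \<subseteq> UNIV \<and> length xs = n}" unfolding lang_n_def by auto
  then show ?thesis using finite_lists_length_eq[of "UNIV :: 'a set" n] finite_subset by auto
qed



lemma lo_refl: "linear_order r \<Longrightarrow> (x, x) \<in> r"
  unfolding linear_order_on_def partial_order_on_def preorder_on_def refl_on_def by auto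
lemma lo_trans: "linear_order r \<Longrightarrow> (x, y) \<in> r \<Longrightarrow> (y, z) \<in> r \<Longrightarrow> (x, z) \<in> r"
  unfolding linear_order_on_def partial_order_on_def preorder_on_def trans_def by blast
lemma lo_antisym: "linear_order r \<Longrightarrow> (x, y) \<in> r \<Longrightarrow> (y, x) \<in> r \<Longrightarrow> x = y"
  unfolding linear_order_on_def partial_order_on_def antisym_def by blast
lemma lo_total: assumes "linear_order r" shows "(x, y) \<in> r \<or> (y, x) \<in> r"
proof (cases "x = y")
  case True then show ?thesis using lo_refl[OF assms] by auto
next
  case False then show ?thesis using assms unfolding linear_order_on_def total_on_def by blast
qed

lemma sorted_exists:
  assumes lo: "linear_order r" and fin: "finite S"
  shows "\<exists>cs. distinct cs \<and> set cs = S \<and> sorted_wrt (\<lambda>x y. (x, y) \<in> r) cs"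
  using fin
proof (induction S rule: finite_induct)
  case empty then show ?case by auto
next
  case (insert x S)
  then obtain cs where cs: "distinct cs" "set cs = S" "sorted_wrt (\<lambda>x y. (x, y) \<in> r) cs" by blast
  define cs1 where "cs1 = filter (\<lambda>y. (y, x) \<in> r) cs"
  define cs2 where "cs2 = filter (\<lambda>y. (y, x) \<notin> r) cs"
  have s1: "sorted_wrt (\<lambda>x y. (x, y) \<in> r) cs1" "sorted_wrt (\<lambda>x y. (x, y) \<in> r) cs2"
    using cs(3) unfolding cs1_def cs2_def by (auto intro: sorted_wrt_filter)
  have x2: "\<forall>y\<in>set cs2. (x, y) \<in> r" using lo_total[OF lo] unfolding cs2_def by auto
  have c12: "\<forall>y1\<in>set cs1. \<forall>y2\<in>set cs2. (y1, y2) \<in> r"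
  proof (intro ballI)
    fix y1 y2 assume "y1 \<in> set cs1" "y2 \<in> set cs2"
    then have h: "(y1, x) \<in> r" "(y2, x) \<notin> r" by (auto simp: cs1_def cs2_def)
    show "(y1, y2) \<in> r"
    proof (rule ccontr)
      assume "(y1, y2) \<notin> r"
      then have "(y2, y1) \<in> r" using lo_total[OF lo] by blast
      then have "(y2, x) \<in> r" using lo_trans[OF lo] h(1) by blast
      then show False using h(2) by blast
    qed
  qed
  have x1: "\<forall>y\<in>set cs1. (y, x) \<in> r" unfolding cs1_def by simp
  have "sorted_wrt (\<lambda>x y. (x, y) \<in> r) (x # cs2)" using s1(2) x2 by simp
  then have "sorted_wrt (\<lambda>x y. (x, y) \<in> r) (cs1 @ x # cs2)"
    using s1(1) x1 c12 unfolding sorted_wrt_append by simp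
  moreover have "distinct (cs1 @ x # cs2)" using cs insert(2) unfolding cs1_def cs2_def
    by (auto simp: distinct_filter)
  moreover have "set (cs1 @ x # cs2) = insert x S" using cs unfolding cs1_def cs2_def by auto
  ultimately show ?case by blast
qed

lemma sorted_unique:
  assumes lo: "linear_order r"
  shows "distinct xs \<Longrightarrow> distinct ys \<Longrightarrow> set xs = set ys \<Longrightarrow> sorted_wrt (\<lambda>x y. (x, y) \<in> r) xs
    \<Longrightarrow> sorted_wrt (\<lambda>x y. (x, y) \<in> r) ys \<Longrightarrow> xs = ys"
proof (induction xs arbitrary: ys)
  case Nil then show ?case by simp
next
  case (Cons x xs)
  then obtain y ys' where ys: "ys = y # ys'" by (cases ys) auto
  have "x = y"
  proof (rule ccontr)
    assume "x \<noteq> y"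
    then have "y \<in> set xs" "x \<in> set ys'" using Cons.prems(3) ys by auto
    then have "(x, y) \<in> r" "(y, x) \<in> r" using Cons.prems(4,5) ys by auto
    then show False using lo_antisym[OF lo] \<open>x \<noteq> y\<close> by blast
  qed
  moreover have "set xs = set ys'" using Cons.prems ys \<open>x = y\<close>
    by (metis distinct.simps(2) list.simps(15) insert_ident)
  ultimately show ?case using Cons ys by auto
qed

lemma order_enum_props:
  assumes lo: "linear_order (r :: ('a::finite) rel)"
  shows "distinct (order_enum r) \<and> set (order_enum r) = UNIV \<and> sorted_wrt (\<lambda>x y. (x, y) \<in> r) (order_enum r)"
proof -
  have "\<exists>!cs. distinct cs \<and> set cs = UNIV \<and> sorted_wrt (\<lambda>x y. (x, y) \<in> r) cs"
    using sorted_exists[OF lo, of UNIV] sorted_unique[OF lo] by auto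
  then show ?thesis unfolding order_enum_def by (rule theI')
qed

lemma order_enum_lt:
  assumes lo: "linear_order (r :: ('a::finite) rel)"
    and i: "i < length (order_enum r)" and j: "j < length (order_enum r)"
  shows "((order_enum r ! i, order_enum r ! j) \<in> r \<and> order_enum r ! i \<noteq> order_enum r ! j) \<longleftrightarrow> i < j"
proof -
  let ?cs = "order_enum r"
  have p: "distinct ?cs" "sorted_wrt (\<lambda>x y. (x, y) \<in> r) ?cs" using order_enum_props[OF lo] by auto
  show ?thesis
  proof
    assume h: "(?cs ! i, ?cs ! j) \<in> r \<and> ?cs ! i \<noteq> ?cs ! j"
    show "i < j"
    proof (rule ccontr)
      assume "\<not> i < j"
      then have "j < i \<or> j = i" by auto
      then show False
      proof
        assume "j < i"
        then have "(?cs ! j, ?cs ! i) \<in> r" using p(2) i by (simp add: sorted_wrt_iff_nth_less)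
        then show False using h lo_antisym[OF lo] by blast
      qed (use h in auto)
    qed
  next
    assume "i < j"
    then show "(?cs ! i, ?cs ! j) \<in> r \<and> ?cs ! i \<noteq> ?cs ! j"
      using p i j by (auto simp: sorted_wrt_iff_nth_less nth_eq_iff_index_eq)
  qed
qed



locale lsys =
  fixes L :: "('a::finite) list set" and rL rR :: "'a rel"
  assumes fact1: "u @ v \<in> L \<Longrightarrow> u \<in> L"
    and fact2: "u @ v \<in> L \<Longrightarrow> v \<in> L"
    and extL: "w \<in> L \<Longrightarrow> \<exists>a. a # w \<in> L"
    and extR: "w \<in> L \<Longrightarrow> \<exists>b. w @ [b] \<in> L"
    and letters: "[a] \<in> L"
    and recur: "v \<in> L \<Longrightarrow> w \<in> L \<Longrightarrow> \<exists>p. v @ p @ w \<in> L"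
    and connL: "w \<in> L \<Longrightarrow> (\<And>a b. a # w @ [b] \<in> L \<Longrightarrow> ((SL :: 'a \<Rightarrow> bool) a \<longleftrightarrow> (SR :: 'a \<Rightarrow> bool) b))
        \<Longrightarrow> a # w \<in> L \<Longrightarrow> a' # w \<in> L \<Longrightarrow> SL a = SL a'"
    and connR: "w \<in> L \<Longrightarrow> (\<And>a b. a # w @ [b] \<in> L \<Longrightarrow> ((SL :: 'a \<Rightarrow> bool) a \<longleftrightarrow> (SR :: 'a \<Rightarrow> bool) b))
        \<Longrightarrow> w @ [b] \<in> L \<Longrightarrow> w @ [b'] \<in> L \<Longrightarrow> SR b = SR b'"
    and nocyc: "w \<in> L \<Longrightarrow> a1 \<noteq> a2 \<Longrightarrow> b1 \<noteq> b2 \<Longrightarrow> a1 # w @ [b1] \<in> L \<Longrightarrow> a2 # w @ [b1] \<in> L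
        \<Longrightarrow> a1 # w @ [b2] \<in> L \<Longrightarrow> a2 # w @ [b2] \<in> L \<Longrightarrow> False"
    and planar: "w \<in> L \<Longrightarrow> a1 # w @ [b1] \<in> L \<Longrightarrow> a2 # w @ [b2] \<in> L
        \<Longrightarrow> (a1, a2) \<in> rL \<Longrightarrow> a1 \<noteq> a2 \<Longrightarrow> (b1, b2) \<in> rR"
    and loL: "linear_order rL" and loR: "linear_order rR"
begin

definition lt :: "'a \<Rightarrow> 'a \<Rightarrow> bool" where "lt a b \<longleftrightarrow> (a, b) \<in> rL \<and> a \<noteq> b"

lemma Nil_in: "[] \<in> L" using fact1[of "[]" "[undefined]"] letters by auto

lemma mid_unique:
  assumes "w \<in> L" "lt a1 a2" "lt a2 a3" "a1 # w @ [z] \<in> L" "a3 # w @ [z] \<in> L" "a2 # w @ [z'] \<in> L"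
  shows "z' = z"
proof -
  have "(z, z') \<in> rR" using planar[OF assms(1,4,6)] assms(2) unfolding lt_def by blast
  moreover have "(z', z) \<in> rR" using planar[OF assms(1,6,5)] assms(3) unfolding lt_def by blast
  ultimately show ?thesis using lo_antisym[OF loR] by blast
qed

lemma interval:
  assumes "v \<in> L" "lt a1 a2" "lt a2 a3" "a1 # v \<in> L" "a3 # v \<in> L"
  shows "a2 # v \<in> L"
  using assms
proof (induction v rule: rev_induct)
  case Nil
  then show ?case using letters by simp
next
  case (snoc z u)
  have u: "u \<in> L" using fact1 snoc.prems(1) by blast
  have "a1 # u \<in> L" "a3 # u \<in> L" using fact1[of "a1 # u" "[z]"] fact1[of "a3 # u" "[z]"] snoc.prems by auto
  then have "a2 # u \<in> L" using snoc.IH u snoc.prems(2,3) by blast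
  then obtain z' where z': "a2 # u @ [z'] \<in> L" using extR by fastforce
  have "z' = z" using mid_unique[OF u snoc.prems(2,3) _ _ z'] snoc.prems(4,5) by simp
  then show ?case using z' by simp
qed

lemma pair_exists:
  assumes w: "w \<in> L" and lt12: "lt a1 a2" and cons: "\<And>c. \<not> (lt a1 c \<and> lt c a2)"
    and e1: "a1 # w \<in> L" and e2: "a2 # w \<in> L"
  shows "\<exists>z. a1 # w @ [z] \<in> L \<and> a2 # w @ [z] \<in> L"
proof (rule ccontr)
  assume nc: "\<not> (\<exists>z. a1 # w @ [z] \<in> L \<and> a2 # w @ [z] \<in> L)"
  define SL where "SL a = ((a, a1) \<in> rL)" for a
  define SR where "SR z = (\<exists>z1. a1 # w @ [z1] \<in> L \<and> (z, z1) \<in> rR)" for z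
  obtain z1 where z1: "a1 # w @ [z1] \<in> L" using extR e1 by fastforce
  obtain z2 where z2: "a2 # w @ [z2] \<in> L" using extR e2 by fastforce
  have "SL a \<longleftrightarrow> SR b" if ab: "a # w @ [b] \<in> L" for a b
  proof
    assume "SL a"
    show "SR b"
    proof (cases "a = a1")
      case True then show ?thesis using ab lo_refl[OF loR] unfolding SR_def by blast
    next
      case False
      then have "(b, z1) \<in> rR" using planar[OF w ab z1] \<open>SL a\<close> unfolding SL_def by blast
      then show ?thesis using z1 unfolding SR_def by blast
    qed
  next
    assume "SR b"
    then obtain z1' where z1': "a1 # w @ [z1'] \<in> L" "(b, z1') \<in> rR" unfolding SR_def by blast
    show "SL a"
    proof (rule ccontr)
      assume "\<not> SL a"
      then have "(a1, a) \<in> rL" "a1 \<noteq> a" using lo_total[OF loL] lo_refl[OF loL] unfolding SL_def by blast+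
      then have "(z1', b) \<in> rR" using planar[OF w z1'(1) ab] by blast
      then have bz: "b = z1'" using z1' lo_antisym[OF loR] by blast
      show False
      proof (cases "a = a2")
        case True then show False using nc ab z1' bz by blast
      next
        case False
        then have "lt a2 a" using cons[of a] \<open>(a1, a) \<in> rL\<close> \<open>a1 \<noteq> a\<close> lo_total[OF loL] unfolding lt_def by blast
        then have "(z2, b) \<in> rR" using planar[OF w z2 ab] unfolding lt_def by blast
        moreover have "(z1', z2) \<in> rR" using planar[OF w z1'(1) z2] lt12 unfolding lt_def by blast
        ultimately have "z2 = z1'" using bz lo_antisym[OF loR] by blast
        then show False using nc z1' z2 by blast
      qed
    qed
  qed
  then have "SL a1 = SL a2" using connL[OF w _ e1 e2, of SL SR] by blast
  moreover have "SL a1" unfolding SL_def using lo_refl[OF loL] by blast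
  moreover have "\<not> SL a2" unfolding SL_def using lt12 lo_antisym[OF loL] unfolding lt_def by blast
  ultimately show False by blast
qed

lemma pair_unique:
  assumes "w \<in> L" "a1 \<noteq> a2" "a1 # w @ [z] \<in> L" "a2 # w @ [z] \<in> L" "a1 # w @ [z'] \<in> L" "a2 # w @ [z'] \<in> L"
  shows "z = z'"
  using nocyc[OF assms(1,2) _ assms(3,4,5,6)] by blast

abbreviation cs where "cs \<equiv> order_enum rL"

lemma cs_props: "distinct cs" "set cs = UNIV" using order_enum_props[OF loL] by auto

lemma cs_lt: "i < length cs \<Longrightarrow> j < length cs \<Longrightarrow> lt (cs ! i) (cs ! j) \<longleftrightarrow> i < j"
  using order_enum_lt[OF loL] unfolding lt_def by blast

lemma cs_idx: "\<exists>i < length cs. a = cs ! i"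
  using cs_props(2) by (metis UNIV_I in_set_conv_nth)

lemma cs_cons: "Suc i < length cs \<Longrightarrow> \<not> (lt (cs ! i) c \<and> lt c (cs ! Suc i))"
  using cs_idx[of c] cs_lt by fastforce

lemma pair_count:
  "Suc i < length cs \<Longrightarrow> \<exists>!v. v \<in> L \<and> length v = n \<and> cs ! i # v \<in> L \<and> cs ! Suc i # v \<in> L"
proof (induction n)
  case 0
  have "[] \<in> L" by (rule Nil_in)
  then show ?case using letters by auto
next
  case (Suc n)
  then obtain u where u: "u \<in> L" "length u = n" "cs ! i # u \<in> L" "cs ! Suc i # u \<in> L"
    and uu: "\<And>u'. u' \<in> L \<and> length u' = n \<and> cs ! i # u' \<in> L \<and> cs ! Suc i # u' \<in> L \<Longrightarrow> u' = u"
    by blast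
  have lt: "lt (cs ! i) (cs ! Suc i)" using cs_lt Suc.prems by simp
  have neq: "cs ! i \<noteq> cs ! Suc i" using lt unfolding lt_def by blast
  obtain z where z: "cs ! i # u @ [z] \<in> L" "cs ! Suc i # u @ [z] \<in> L"
    using pair_exists[OF u(1) lt cs_cons[OF Suc.prems] u(3,4)] by blast
  show ?case
  proof (rule ex1I[of _ "u @ [z]"])
    show "u @ [z] \<in> L \<and> length (u @ [z]) = Suc n \<and> cs ! i # u @ [z] \<in> L \<and> cs ! Suc i # u @ [z] \<in> L"
      using z u fact2[of "[cs ! i]" "u @ [z]"] by simp
  next
    fix v assume v: "v \<in> L \<and> length v = Suc n \<and> cs ! i # v \<in> L \<and> cs ! Suc i # v \<in> L"
    then obtain u' z' where vv: "v = u' @ [z']" by (metis length_Suc_conv_rev)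
    have "u' \<in> L" "cs ! i # u' \<in> L" "cs ! Suc i # u' \<in> L"
      using v vv fact1[of u' "[z']"] fact1[of "cs ! i # u'" "[z']"] fact1[of "cs ! Suc i # u'" "[z']"] by auto
    then have "u' = u" using uu v vv by simp
    then have "z' = z" using pair_unique[OF u(1) neq z] v vv by (metis (no_types) append_Cons)
    then show "v = u @ [z]" using vv \<open>u' = u\<close> by simp
  qed
qed

end


context lsys begin

definition Ln where "Ln n = {v \<in> L. length v = n}"

lemma finite_Ln: "finite (Ln n)"
proof -
  have "Ln n \<subseteq> {xs. set xs \<subseteq> UNIV \<and> length xs = n}" unfolding Ln_def by auto
  then show ?thesis using finite_lists_length_eq[of "UNIV :: 'a set" n] finite_subset by auto
qed

definition T where "T n b \<longleftrightarrow> (\<exists>v\<in>L. length v = n \<and> (\<exists>a c. lt a b \<and> lt b c \<and> a # v \<in> L \<and> b # v \<in> L \<and> c # v \<in> L))"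

lemma T_mono: assumes "T n b" "m \<le> n" shows "T m b"
proof -
  obtain v a c where v: "v \<in> L" "length v = n" "lt a b" "lt b c" "a # v \<in> L" "b # v \<in> L" "c # v \<in> L"
    using assms(1) unfolding T_def by blast
  have "\<And>x. x # v \<in> L \<Longrightarrow> x # take m v \<in> L"
    using fact1 by (metis append_take_drop_id append_Cons)
  moreover have "take m v \<in> L" using v(1) fact1 by (metis append_take_drop_id)
  ultimately show ?thesis unfolding T_def using v assms(2) by (intro bexI[of _ "take m v"]) auto
qed

lemma unique_future:
  assumes T: "\<And>n. T n b"
  shows "length w = length w' \<Longrightarrow> b # w \<in> L \<Longrightarrow> b # w' \<in> L \<Longrightarrow> w = w'"
proof (induction "length w" arbitrary: w w')
  case 0 then show ?case by simp
next
  case (Suc k)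
  obtain w0 z1 where w: "w = w0 @ [z1]" by (metis Suc.hyps(2) length_Suc_conv_rev)
  obtain w0' z2 where w': "w' = w0' @ [z2]" by (metis Suc.hyps(2) Suc.prems(1) length_Suc_conv_rev)
  have b0: "b # w0 \<in> L" "b # w0' \<in> L" using Suc.prems w w' fact1 by (metis append_Cons)+
  have "w0 = w0'" using Suc.hyps(1)[of w0 w0'] Suc.hyps(2) Suc.prems(1) w w' b0 by simp
  obtain v a c where v: "v \<in> L" "length v = Suc k" "lt a b" "lt b c" "a # v \<in> L" "b # v \<in> L" "c # v \<in> L"
    using T[of "Suc k"] unfolding T_def by blast
  obtain u z where vu: "v = u @ [z]" by (metis v(2) length_Suc_conv_rev)
  have uL: "u \<in> L" using v(1) vu fact1 by blast
  have "b # u \<in> L" using v(6) vu fact1 by (metis append_Cons)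
  then have "u = w0" using Suc.hyps(1)[of u w0] Suc.hyps(2) w vu v(2) b0 by simp
  have "z1 = z" using mid_unique[OF uL v(3,4), of z z1] v(5,7) vu Suc.prems(2) w \<open>u = w0\<close> by simp
  moreover have "z2 = z" using mid_unique[OF uL v(3,4), of z z2] v(5,7) vu Suc.prems(3) w' \<open>u = w0\<close> \<open>w0 = w0'\<close> by simp
  ultimately show ?case using w w' \<open>w0 = w0'\<close> by simp
qed

lemma card_tl_less:
  assumes "finite S" "x \<in> S" "y \<in> S" "x \<noteq> y" "f x = f y"
  shows "card (f ` S) < card S"
proof -
  have "f ` S = f ` (S - {x})" using assms by (auto simp: image_iff)
  then have "card (f ` S) \<le> card (S - {x})" using card_image_le assms(1) by (metis finite_Diff)
  also have "\<dots> < card S" by (rule card_Diff1_less[OF assms(1,2)])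
  finally show ?thesis .
qed

lemma Ln_grow:
  assumes T: "\<And>n. T n b"
  shows "card (Ln n) \<ge> n + 1"
proof (induction n)
  case 0
  have "[] \<in> Ln 0" using Nil_in unfolding Ln_def by simp
  then show ?case using finite_Ln[of 0] card_0_eq by fastforce
next
  case (Suc n)
  have "tl ` Ln (Suc n) = Ln n"
  proof
    show "tl ` Ln (Suc n) \<subseteq> Ln n"
    proof
      fix v assume "v \<in> tl ` Ln (Suc n)"
      then obtain w where w: "w \<in> Ln (Suc n)" "v = tl w" by blast
      then obtain a where "w = a # v" unfolding Ln_def by (cases w) auto
      then show "v \<in> Ln n" using w fact2[of "[a]" v] unfolding Ln_def by auto
    qed
  next
    show "Ln n \<subseteq> tl ` Ln (Suc n)"
    proof
      fix v assume v: "v \<in> Ln n"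
      then obtain a where "a # v \<in> L" using extL unfolding Ln_def by blast
      then have "a # v \<in> Ln (Suc n)" using v unfolding Ln_def by simp
      then show "v \<in> tl ` Ln (Suc n)" by force
    qed
  qed
  moreover obtain v a c where v: "v \<in> L" "length v = n" "lt a b" "a # v \<in> L" "b # v \<in> L"
    using T[of n] unfolding T_def by blast
  moreover have "a # v \<in> Ln (Suc n)" "b # v \<in> Ln (Suc n)" using v unfolding Ln_def by auto
  moreover have "a # v \<noteq> b # v" using v(3) unfolding lt_def by simp
  ultimately have "card (Ln n) < card (Ln (Suc n))"
    using card_tl_less[OF finite_Ln, of "a # v" "Suc n" "b # v" tl] by simp
  then show ?case using Suc.IH by simp
qed

lemma periodic:
  assumes T: "\<And>n. T n b" and P: "b # p @ [b] \<in> L"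
  shows "b # q \<in> L \<Longrightarrow> j < length q + 1 \<Longrightarrow> (b # q) ! j = (b # p) ! (j mod (length p + 1))"
proof (induction "length q" arbitrary: q j rule: less_induct)
  case less
  define m where "m = length p + 1"
  show ?case
  proof (cases "length q < m")
    case True
    obtain k where k: "k = length q" by blast
    have "(b # take k (p @ [b])) @ drop k (p @ [b]) \<in> L"
      using P by (simp only: append_Cons append_take_drop_id)
    then have "b # take k (p @ [b]) \<in> L" by (rule fact1)
    moreover have "length (take k (p @ [b])) = length q" using True k unfolding m_def by simp
    ultimately have eq: "q = take k (p @ [b])" using unique_future[OF T, of q] less.prems(1) by simp
    have jk: "j < k + 1" using less.prems(2) k by simp
    have "(b # q) ! j = (b # p @ [b]) ! j"
    proof (cases j)
      case 0 then show ?thesis by simp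
    next
      case (Suc j')
      then have "j' < k" using jk by simp
      then have "q ! j' = (p @ [b]) ! j'" unfolding eq by (rule nth_take)
      then show ?thesis using Suc by simp
    qed
    also have "\<dots> = (b # p) ! (j mod m)"
    proof (cases "j < m")
      case True
      then show ?thesis unfolding m_def by (cases j) (auto simp: nth_append)
    next
      case False
      then have "j = m" using less.prems(2) \<open>length q < m\<close> by simp
      then show ?thesis unfolding m_def by (simp add: nth_append)
    qed
    finally show ?thesis unfolding m_def by simp
  next
    case False
    have "b # take (length p + 1) q \<in> L"
      using less.prems(1) fact1[of "b # take (length p + 1) q" "drop (length p + 1) q"] by simp
    moreover have "length (take (length p + 1) q) = length (p @ [b])" using False unfolding m_def by simp
    ultimately have tq: "take (length p + 1) q = p @ [b]" using unique_future[OF T] P by blast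
    define r where "r = drop (length p + 1) q"
    have qr: "q = p @ [b] @ r" using tq unfolding r_def by (metis append_assoc append_take_drop_id)
    have rL: "b # r \<in> L" using less.prems(1) qr fact2[of "b # p" "b # r"] by simp
    have lr: "length r < length q" using qr by simp
    show ?thesis
    proof (cases "j < m")
      case True
      then show ?thesis using qr unfolding m_def by (cases j) (auto simp: nth_append)
    next
      case False
      then have jm: "j - m < length r + 1" using less.prems(2) qr unfolding m_def by simp
      have bq: "b # q = (b # p) @ (b # r)" using qr by simp
      have "(b # q) ! j = (b # r) ! (j - m)" unfolding bq using False unfolding m_def
        by (subst nth_append) simp
      also have "\<dots> = (b # p) ! ((j - m) mod m)" using less.hyps[OF lr rL jm] unfolding m_def by simp
      also have "(j - m) mod m = j mod m" using False by (simp add: mod_if)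
      finally show ?thesis unfolding m_def by simp
    qed
  qed
qed

lemma eventually_no_triple:
  "\<exists>N. \<forall>n\<ge>N. \<forall>b. \<not> T n b"
proof (rule ccontr)
  assume "\<not> ?thesis"
  then have H: "\<forall>N. \<exists>n\<ge>N. \<exists>b. T n b" by blast
  have "\<exists>b. \<forall>n. T n b"
  proof (rule ccontr)
    assume "\<not> (\<exists>b. \<forall>n. T n b)"
    then have "\<forall>b. \<exists>n. \<not> T n b" by blast
    then obtain nb where nb: "\<And>b. \<not> T (nb b) b" by metis
    define N where "N = Max (range nb)"
    obtain n b where "n \<ge> N" "T n b" using H by blast
    moreover have "nb b \<le> N" unfolding N_def by simp
    ultimately have "T (nb b) b" using T_mono by simp
    then show False using nb by blast
  qed
  then obtain b where T: "\<And>n. T n b" by blast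
  obtain p where P: "[b] @ p @ [b] \<in> L" using recur[OF letters letters] by blast
  define m where "m = length p + 1"
  define g where "g k = map (\<lambda>j. (b # p) ! ((k + j) mod m)) [0..<m]" for k
  have "Ln m \<subseteq> g ` {..<m}"
  proof
    fix u assume u: "u \<in> Ln m"
    then obtain p' where p': "[b] @ p' @ u \<in> L" using recur[OF letters] unfolding Ln_def by blast
    have "u = g (length p' + 1)"
    proof (rule nth_equalityI)
      show "length u = length (g (length p' + 1))" using u unfolding g_def Ln_def by simp
    next
      fix j assume j: "j < length u"
      have "u ! j = (b # (p' @ u)) ! (length p' + 1 + j)" by (simp add: nth_append)
      also have "\<dots> = (b # p) ! ((length p' + 1 + j) mod m)"
        using periodic[OF T, of p "p' @ u" "length p' + 1 + j"] P p' j unfolding m_def by simp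
      finally show "u ! j = g (length p' + 1) ! j" using j u unfolding g_def Ln_def by simp
    qed
    moreover have "g (length p' + 1) = g ((length p' + 1) mod m)" unfolding g_def
      by (simp add: mod_add_left_eq)
    moreover have "(length p' + 1) mod m < m" unfolding m_def by simp
    ultimately show "u \<in> g ` {..<m}" by blast
  qed
  then have "card (Ln m) \<le> card (g ` {..<m})" by (intro card_mono) auto
  also have "\<dots> \<le> card {..<m}" by (rule card_image_le) simp
  finally have "card (Ln m) \<le> m" by simp
  moreover have "card (Ln m) \<ge> m + 1" by (rule Ln_grow[OF T])
  ultimately show False by simp
qed

end


context lsys begin

definition EL where "EL v = {a. a # v \<in> L}"

lemma shape:
  assumes noT: "\<forall>b. \<not> T n b" and v: "v \<in> Ln n" and a: "a \<in> EL v" "a' \<in> EL v" "a \<noteq> a'"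
  shows "\<exists>i. Suc i < length cs \<and> EL v = {cs ! i, cs ! Suc i}"
proof -
  have vL: "v \<in> L" and vn: "length v = n" using v unfolding Ln_def by auto
  have notrip: "\<And>x y z. lt x y \<Longrightarrow> lt y z \<Longrightarrow> x \<in> EL v \<Longrightarrow> y \<in> EL v \<Longrightarrow> z \<in> EL v \<Longrightarrow> False"
    using noT vL vn unfolding T_def EL_def by blast
  obtain i j where ij: "i < length cs" "j < length cs" "i < j" "cs ! i \<in> EL v" "cs ! j \<in> EL v"
  proof -
    obtain i where i: "i < length cs" "a = cs ! i" using cs_idx by blast
    obtain j where j: "j < length cs" "a' = cs ! j" using cs_idx by blast
    have "i \<noteq> j" using i j a(3) by blast
    then show ?thesis using that i j a by (cases "i < j") (auto simp: not_less_iff_gr_or_eq)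
  qed
  have ji: "j = Suc i"
  proof (rule ccontr)
    assume "j \<noteq> Suc i"
    then have lt1: "Suc i < j" using ij(3) by simp
    then have "lt (cs ! i) (cs ! Suc i)" "lt (cs ! Suc i) (cs ! j)" using cs_lt ij(2) by auto
    moreover have "cs ! Suc i \<in> EL v" using interval[OF vL calculation] ij(4,5) unfolding EL_def by blast
    ultimately show False using notrip ij(4,5) by blast
  qed
  have "EL v = {cs ! i, cs ! Suc i}"
  proof
    show "{cs ! i, cs ! Suc i} \<subseteq> EL v" using ij ji by auto
  next
    show "EL v \<subseteq> {cs ! i, cs ! Suc i}"
    proof
      fix c assume c: "c \<in> EL v"
      obtain k where k: "k < length cs" "c = cs ! k" using cs_idx by blast
      show "c \<in> {cs ! i, cs ! Suc i}"
      proof (rule ccontr)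
        assume "c \<notin> {cs ! i, cs ! Suc i}"
        then have "k \<noteq> i" "k \<noteq> Suc i" using k by auto
        then have "k < i \<or> Suc i < k" by auto
        then show False
        proof
          assume "k < i"
          then have "lt (cs ! k) (cs ! i)" "lt (cs ! i) (cs ! Suc i)" using cs_lt ij k ji by auto
          then show False using notrip c k ij ji by blast
        next
          assume "Suc i < k"
          then have "lt (cs ! i) (cs ! Suc i)" "lt (cs ! Suc i) (cs ! k)" using cs_lt ij k ji by auto
          then show False using notrip c k ij ji by blast
        qed
      qed
    qed
  qed
  then show ?thesis using ij(2) ji by blast
qed

lemma cs_pair_eq:
  assumes "Suc i < length cs" "Suc j < length cs" "{cs ! i, cs ! Suc i} = {cs ! j, cs ! Suc j}"
  shows "i = j"
proof -
  have d: "distinct cs" by (rule cs_props)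
  have "cs ! i = cs ! j \<or> cs ! i = cs ! Suc j" using assms(3) by blast
  then have "i = j \<or> i = Suc j" using d assms(1,2) by (auto simp: nth_eq_iff_index_eq)
  moreover have "cs ! Suc i = cs ! j \<or> cs ! Suc i = cs ! Suc j" using assms(3) by blast
  then have "Suc i = j \<or> Suc i = Suc j" using d assms(1,2) by (auto simp: nth_eq_iff_index_eq)
  ultimately show ?thesis by auto
qed

lemma left_main:
  "\<exists>N. \<forall>n\<ge>N. cgraph_iso (multi_clique (Ln n) EL) (order_graph rL)"
proof -
  obtain N where N: "\<And>n b. n \<ge> N \<Longrightarrow> \<not> T n b" using eventually_no_triple by blast
  have "cgraph_iso (multi_clique (Ln n) EL) (order_graph rL)" if n: "n \<ge> N" for n
  proof -
    let ?G = "multi_clique (Ln n) EL"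
    define LS where "LS = {v \<in> Ln n. \<exists>a a'. a \<in> EL v \<and> a' \<in> EL v \<and> a \<noteq> a'}"
    define f where "f v = (SOME i. Suc i < length cs \<and> EL v = {cs ! i, cs ! Suc i})" for v
    have fv: "Suc (f v) < length cs \<and> EL v = {cs ! f v, cs ! Suc (f v)}" if "v \<in> LS" for v
    proof -
      have "\<exists>i. Suc i < length cs \<and> EL v = {cs ! i, cs ! Suc i}"
        using shape[of n v] N[OF n] that unfolding LS_def by blast
      then show ?thesis unfolding f_def by (rule someI_ex)
    qed
    have fstG: "fst ` ?G = LS" unfolding multi_clique_def LS_def by force
    have G: "?G = (\<lambda>v. (v, {cs ! f v, cs ! Suc (f v)})) ` LS"
    proof
      show "?G \<subseteq> (\<lambda>v. (v, {cs ! f v, cs ! Suc (f v)})) ` LS"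
      proof
        fix x assume "x \<in> ?G"
        then obtain v a b where x: "x = (v, {a, b})" "v \<in> Ln n" "a \<in> EL v" "b \<in> EL v" "a \<noteq> b"
          unfolding multi_clique_def by blast
        then have vLS: "v \<in> LS" unfolding LS_def by blast
        then have "{a, b} = {cs ! f v, cs ! Suc (f v)}" using fv[OF vLS] x by auto
        then show "x \<in> (\<lambda>v. (v, {cs ! f v, cs ! Suc (f v)})) ` LS" using x vLS by auto
      qed
    next
      show "(\<lambda>v. (v, {cs ! f v, cs ! Suc (f v)})) ` LS \<subseteq> ?G"
      proof
        fix x assume "x \<in> (\<lambda>v. (v, {cs ! f v, cs ! Suc (f v)})) ` LS"
        then obtain v where v: "v \<in> LS" "x = (v, {cs ! f v, cs ! Suc (f v)})" by blast
        have "cs ! f v \<noteq> cs ! Suc (f v)" using cs_props(1) fv[OF v(1)] by (simp add: nth_eq_iff_index_eq)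
        then show "x \<in> ?G" using fv[OF v(1)] v unfolding multi_clique_def LS_def by blast
      qed
    qed
    have OG: "order_graph rL = (\<lambda>i. (i, {cs ! i, cs ! Suc i})) ` {i. Suc i < length cs}"
      unfolding order_graph_def Let_def by auto
    have bij: "bij_betw f LS {i. Suc i < length cs}"
    proof (rule bij_betw_imageI)
      show "inj_on f LS"
      proof (rule inj_onI)
        fix v v' assume vv: "v \<in> LS" "v' \<in> LS" "f v = f v'"
        have "\<exists>!u. u \<in> L \<and> length u = n \<and> cs ! f v # u \<in> L \<and> cs ! Suc (f v) # u \<in> L"
          using pair_count fv[OF vv(1)] by blast
        moreover have "v \<in> L \<and> length v = n \<and> cs ! f v # v \<in> L \<and> cs ! Suc (f v) # v \<in> L"
          using fv[OF vv(1)] vv(1) unfolding LS_def Ln_def EL_def by blast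
        moreover have "v' \<in> L \<and> length v' = n \<and> cs ! f v # v' \<in> L \<and> cs ! Suc (f v) # v' \<in> L"
          using fv[OF vv(2)] vv(2,3) unfolding LS_def Ln_def EL_def by auto
        ultimately show "v = v'" by blast
      qed
    next
      show "f ` LS = {i. Suc i < length cs}"
      proof
        show "f ` LS \<subseteq> {i. Suc i < length cs}" using fv by auto
      next
        show "{i. Suc i < length cs} \<subseteq> f ` LS"
        proof
          fix i assume i: "i \<in> {i. Suc i < length cs}"
          then obtain v where v: "v \<in> L" "length v = n" "cs ! i # v \<in> L" "cs ! Suc i # v \<in> L"
            using pair_count by blast
          have "cs ! i \<noteq> cs ! Suc i" using cs_props(1) i by (simp add: nth_eq_iff_index_eq)
          then have vLS: "v \<in> LS" using v unfolding LS_def Ln_def EL_def by blast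
          have "{cs ! i, cs ! Suc i} \<subseteq> {cs ! f v, cs ! Suc (f v)}" using fv[OF vLS] v unfolding EL_def by auto
          moreover have "card {cs ! i, cs ! Suc i} = 2" using \<open>cs ! i \<noteq> cs ! Suc i\<close> by simp
          moreover have "card {cs ! f v, cs ! Suc (f v)} \<le> 2" by (simp add: card_insert_le_m1)
          ultimately have "{cs ! i, cs ! Suc i} = {cs ! f v, cs ! Suc (f v)}"
            by (metis card_seteq finite.emptyI finite.insertI)
          then have "i = f v" using cs_pair_eq i fv[OF vLS] by simp
          then show "i \<in> f ` LS" using vLS by blast
        qed
      qed
    qed
    have "fst ` order_graph rL = {i. Suc i < length cs}" unfolding OG by force
    moreover have "order_graph rL = (\<lambda>(c, e). (f c, e)) ` ?G" unfolding OG G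
      using bij unfolding bij_betw_def by (auto simp: image_image)
    ultimately show ?thesis unfolding cgraph_iso_def fstG using bij by auto
  qed
  then show ?thesis by blast
qed

end


definition win :: "(int \<Rightarrow> 'a) \<Rightarrow> int \<Rightarrow> nat \<Rightarrow> 'a list" where
  "win x i n = map (\<lambda>j. x (i + int j)) [0..<n]"

lemma koenig:
  fixes F :: "('a::finite) list set"
  assumes fac: "\<And>u v w. u @ v @ w \<in> F \<Longrightarrow> v \<in> F" and inf: "\<And>n. \<exists>u\<in>F. length u = n"
  shows "\<exists>\<omega>. \<forall>i n. win \<omega> i n \<in> F"
proof -
  define B where "B u \<longleftrightarrow> (\<forall>n. \<exists>p s. length p = n \<and> length s = n \<and> p @ u @ s \<in> F)" for u
  have lvl: "\<exists>p' s'. length p' = n \<and> length s' = n \<and> p' @ u @ s' \<in> F"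
    if "p @ u @ s \<in> F" "length p = N" "length s = N" "n \<le> N" for p u s N n
  proof -
    have "take (N - n) p @ (drop (N - n) p @ u @ take n s) @ drop n s = p @ u @ s" by simp
    then have "drop (N - n) p @ u @ take n s \<in> F" using fac that(1) by metis
    then show ?thesis using that by (intro exI[of _ "drop (N - n) p"] exI[of _ "take n s"]) auto
  qed
  have B0: "B []"
    unfolding B_def
  proof
    fix n
    obtain u where u: "u \<in> F" "length u = n + n" using inf by blast
    have "take n u @ [] @ drop n u \<in> F" using u by simp
    then show "\<exists>p s. length p = n \<and> length s = n \<and> p @ [] @ s \<in> F" using u(2)
      by (intro exI[of _ "take n u"] exI[of _ "drop n u"]) auto
  qed
  have Bstep: "\<exists>a c. B (a # u @ [c])" if Bu: "B u" for u
  proof (rule ccontr)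
    assume "\<not> (\<exists>a c. B (a # u @ [c]))"
    then have "\<forall>ac. \<exists>n. \<not> (\<exists>p s. length p = n \<and> length s = n \<and> p @ (fst ac # u @ [snd ac]) @ s \<in> F)"
      unfolding B_def by auto
    then obtain nf where nf: "\<And>ac. \<not> (\<exists>p s. length p = nf ac \<and> length s = nf ac \<and> p @ (fst ac # u @ [snd ac]) @ s \<in> F)"
      by metis
    define M where "M = Max (range nf)"
    obtain p s where ps: "length p = Suc M" "length s = Suc M" "p @ u @ s \<in> F" using Bu unfolding B_def by blast
    obtain p0 a where p: "p = p0 @ [a]" using ps(1) by (metis length_Suc_conv_rev)
    obtain c s0 where s: "s = c # s0" using ps(2) by (cases s) auto
    have "p0 @ (a # u @ [c]) @ s0 \<in> F" using ps(3) p s by simp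
    moreover have "length p0 = M" "length s0 = M" using ps p s by auto
    moreover have "nf (a, c) \<le> M" unfolding M_def by simp
    ultimately show False using lvl[of p0 "a # u @ [c]" s0 M "nf (a, c)"] nf[of "(a, c)"] by auto
  qed
  define nxt where "nxt u = (SOME u'. (\<exists>a c. u' = a # u @ [c]) \<and> B u')" for u
  have nxt: "(\<exists>a c. nxt u = a # u @ [c]) \<and> B (nxt u)" if "B u" for u
    unfolding nxt_def by (rule someI_ex) (use Bstep[OF that] in blast)
  define U where "U k = (nxt ^^ k) []" for k
  have UB: "B (U k)" for k by (induction k) (auto simp: U_def B0 nxt)
  have US: "\<exists>a c. U (Suc k) = a # U k @ [c]" for k using nxt[OF UB[of k]] by (simp add: U_def)
  have UL: "length (U k) = 2 * k" for k
  proof (induction k)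
    case 0 then show ?case by (simp add: U_def)
  next
    case (Suc k) then show ?case using US[of k] by auto
  qed
  have cons: "U k' ! (j + (k' - k)) = U k ! j" if "k \<le> k'" "j < 2 * k" for k k' j
    using that(1)
  proof (induction k' rule: dec_induct)
    case base then show ?case by simp
  next
    case (step k')
    obtain a c where e: "U (Suc k') = a # U k' @ [c]" using US by blast
    have lt: "j + (k' - k) < length (U k')" using UL that(2) step.hyps(1) by simp
    have "U (Suc k') ! (j + (Suc k' - k)) = (a # U k' @ [c]) ! Suc (j + (k' - k))"
      using e step.hyps(1) by (simp add: Suc_diff_le)
    also have "\<dots> = U k' ! (j + (k' - k))" using lt by (simp add: nth_append)
    finally show ?case using step.IH by simp
  qed
  define \<omega> where "\<omega> i = U (nat \<bar>i\<bar> + 1) ! nat (i + int (nat \<bar>i\<bar> + 1))" for i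
  have \<omega>K: "\<omega> i = U K ! nat (i + int K)" if "nat \<bar>i\<bar> + 1 \<le> K" for i K
  proof -
    let ?k = "nat \<bar>i\<bar> + 1"
    have "nat (i + int ?k) < 2 * ?k" by (simp add: nat_less_iff abs_if)
    then have "U K ! (nat (i + int ?k) + (K - ?k)) = U ?k ! nat (i + int ?k)" using cons that by blast
    moreover have "nat (i + int ?k) + (K - ?k) = nat (i + int K)" using that by linarith
    ultimately have "U K ! nat (i + int K) = U ?k ! nat (i + int ?k)" by metis
    then show ?thesis unfolding \<omega>_def by (rule sym)
  qed
  have "win \<omega> i n \<in> F" for i n
  proof -
    define K where "K = nat \<bar>i\<bar> + n + 1"
    define s where "s = nat (i + int K)"
    have sn: "s + n \<le> length (U K)" unfolding s_def K_def UL
      by (cases "0 \<le> i") (simp_all add: nat_le_iff nat_add_distrib)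
    have "win \<omega> i n = take n (drop s (U K))"
    proof (rule nth_equalityI)
      show "length (win \<omega> i n) = length (take n (drop s (U K)))" using sn unfolding win_def by simp
    next
      fix j assume j: "j < length (win \<omega> i n)"
      then have jn: "j < n" unfolding win_def by simp
      have "win \<omega> i n ! j = \<omega> (i + int j)" using jn unfolding win_def by simp
      also have "\<dots> = U K ! nat (i + int j + int K)" using jn unfolding K_def by (intro \<omega>K) linarith
      also have "nat (i + int j + int K) = s + j" unfolding s_def K_def
        by (cases "0 \<le> i") (simp_all add: nat_add_distrib)
      finally show "win \<omega> i n ! j = take n (drop s (U K)) ! j" using jn sn by simp
    qed
    moreover have "U K \<in> F" using UB[of K] unfolding B_def by (metis append_Nil append_Nil2 length_0_conv)
    moreover have "take s (U K) @ take n (drop s (U K)) @ drop n (drop s (U K)) = U K"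
      by (simp only: append_take_drop_id)
    ultimately show ?thesis using fac by metis
  qed
  then show ?thesis by blast
qed



lemma shift_fwd: "shift_space X \<Longrightarrow> x \<in> X \<Longrightarrow> (\<lambda>j. x (j + 1)) \<in> X"
  unfolding shift_space_def shift_def by blast

lemma shift_bwd: assumes "shift_space X" "x \<in> X" shows "(\<lambda>j. x (j - 1)) \<in> X"
proof -
  have "x \<in> shift ` X" using assms unfolding shift_space_def by blast
  then obtain y where y: "y \<in> X" "x = shift y" by blast
  then have "y = (\<lambda>j. x (j - 1))" unfolding shift_def by auto
  then show ?thesis using y by simp
qed

lemma shift_nat: assumes "shift_space X" "x \<in> X"
  shows "(\<lambda>j. x (j + int k)) \<in> X \<and> (\<lambda>j. x (j - int k)) \<in> X"
proof (induction k)
  case 0 then show ?case using assms by simp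
next
  case (Suc k)
  then have A: "(\<lambda>j. x (j + int k)) \<in> X" and B: "(\<lambda>j. x (j - int k)) \<in> X" by blast+
  have 1: "(\<lambda>j. (\<lambda>j. x (j + int k)) (j + 1)) \<in> X" by (rule shift_fwd[OF assms(1) A])
  have 2: "(\<lambda>j. (\<lambda>j. x (j - int k)) (j - 1)) \<in> X" by (rule shift_bwd[OF assms(1) B])
  have e1: "(\<lambda>j. (\<lambda>j. x (j + int k)) (j + 1)) = (\<lambda>j. x (j + int (Suc k)))"
    by (rule ext) (simp add: add.assoc)
  have e2: "(\<lambda>j. (\<lambda>j. x (j - int k)) (j - 1)) = (\<lambda>j. x (j - int (Suc k)))"
    by (rule ext) (simp add: diff_diff_eq)
  show ?case using 1 2 unfolding e1 e2 by blast
qed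

lemma shift_int: assumes "shift_space X" "x \<in> X" shows "(\<lambda>j. x (j + k)) \<in> X"
proof (cases "0 \<le> k")
  case True
  then have "(\<lambda>j. x (j + k)) = (\<lambda>j. x (j + int (nat k)))" by simp
  then show ?thesis using shift_nat[OF assms, of "nat k"] by simp
next
  case False
  then have eq: "(\<lambda>j. x (j + k)) = (\<lambda>j. x (j - int (nat (- k))))" by simp
  have m: "(\<lambda>j. x (j - int (nat (- k)))) \<in> X" using shift_nat[OF assms, of "nat (- k)"] by (rule conjunct2)
  show ?thesis unfolding eq by (rule m)
qed

lemma win_len[simp]: "length (win x i n) = n" unfolding win_def by simp

lemma in_X:
  assumes ss: "shift_space X" and w: "\<And>n. win \<omega> (- int n) (2 * n + 1) \<in> lang X"
  shows "\<omega> \<in> X"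
proof -
  have "\<exists>y\<in>X. \<forall>i. \<bar>i\<bar> \<le> int n \<longrightarrow> y i = \<omega> i" for n
  proof -
    obtain x i0 where x: "x \<in> X" "\<forall>j<length (win \<omega> (- int n) (2 * n + 1)).
        win \<omega> (- int n) (2 * n + 1) ! j = x (i0 + int j)"
      using w[of n] unfolding lang_iff by blast
    have "(\<lambda>t. x (t + (i0 + int n))) \<in> X" using shift_int[OF ss x(1)] by blast
    moreover have "x (t + (i0 + int n)) = \<omega> t" if t: "\<bar>t\<bar> \<le> int n" for t
    proof -
      define j where "j = nat (t + int n)"
      have j: "j < 2 * n + 1" "int j = t + int n" using t unfolding j_def by auto
      have "win \<omega> (- int n) (2 * n + 1) ! j = x (i0 + int j)" using x(2) j(1) by simp
      moreover have "win \<omega> (- int n) (2 * n + 1) ! j = \<omega> (- int n + int j)" using j(1) unfolding win_def by (simp del: upt_Suc)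
      ultimately show ?thesis using j(2) by (simp add: algebra_simps)
    qed
    ultimately show ?thesis by (intro bexI[of _ "\<lambda>t. x (t + (i0 + int n))"]) auto
  qed
  then have H: "\<forall>n::nat. \<exists>y\<in>X. \<forall>i. \<bar>i\<bar> \<le> int n \<longrightarrow> y i = \<omega> i" by blast
  have "closed_sh X" using ss unfolding shift_space_def by blast
  then show ?thesis using H unfolding closed_sh_def by blast
qed

lemma lang_win: "w \<in> lang X \<longleftrightarrow> (\<exists>x\<in>X. \<exists>i. w = win x i (length w))"
  unfolding lang_def win_def by blast


lemma recur_X:
  fixes X :: "(int \<Rightarrow> 'a::finite) set"
  assumes min: "minimal_shift X" and v: "v \<in> lang X" and w: "w \<in> lang X"
  shows "\<exists>p. v @ p @ w \<in> lang X"
proof -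
  have ss: "shift_space X" using min unfolding minimal_shift_def by blast
  define F where "F = {u. \<exists>p. v @ p @ u \<in> lang X}"
  have fac: "u \<in> F" if uu: "u1 @ u @ u2 \<in> F" for u1 u u2
  proof -
    obtain p where "v @ p @ u1 @ u @ u2 \<in> lang X" using uu unfolding F_def by blast
    then have "(v @ (p @ u1) @ u) @ u2 \<in> lang X" by simp
    then have "v @ (p @ u1) @ u \<in> lang X" by (rule lang_app1)
    then show ?thesis unfolding F_def by blast
  qed
  have inf: "\<exists>u\<in>F. length u = n" for n
  proof -
    obtain s where "length s = n" "v @ s \<in> lang X" using lang_extR_n[OF v] by blast
    then show ?thesis unfolding F_def by (intro bexI[of _ s]) (auto intro: exI[of _ "[]"])
  qed
  have FL: "u \<in> lang X" if uF: "u \<in> F" for u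
  proof -
    obtain p where "(v @ p) @ u \<in> lang X" using uF unfolding F_def by auto
    then show ?thesis by (rule lang_app2)
  qed
  have "\<exists>\<omega>. \<forall>i n. win \<omega> i n \<in> F" by (rule koenig[of F, OF fac inf])
  then obtain \<omega> where om0: "\<forall>i n. win \<omega> i n \<in> F" by (elim exE)
  then have om: "\<And>i n. win \<omega> i n \<in> F" by blast
  define Y where "Y = {x \<in> X. \<forall>i n. win x i n \<in> F}"
  have YX: "Y \<subseteq> X" unfolding Y_def by blast
  have "\<omega> \<in> X" using in_X[OF ss] om FL by blast
  then have Yne: "Y \<noteq> {}" using om unfolding Y_def by blast
  have Ycl: "closed_sh Y"
    unfolding closed_sh_def
  proof (intro allI impI)
    fix x assume H: "\<forall>n. \<exists>y\<in>Y. \<forall>i. \<bar>i\<bar> \<le> int n \<longrightarrow> y i = x i"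
    have clX: "closed_sh X" using ss unfolding shift_space_def by blast
    have "\<forall>n. \<exists>y\<in>X. \<forall>i. \<bar>i\<bar> \<le> int n \<longrightarrow> y i = x i" using H YX by blast
    then have "x \<in> X" using clX unfolding closed_sh_def by blast
    moreover have "win x i n \<in> F" for i n
    proof -
      obtain y where y: "y \<in> Y" "\<forall>t. \<bar>t\<bar> \<le> int (nat \<bar>i\<bar> + n) \<longrightarrow> y t = x t" using H by blast
      have "\<forall>j<n. y (i + int j) = x (i + int j)"
      proof (intro allI impI)
        fix j assume "j < n"
        then have "\<bar>i + int j\<bar> \<le> int (nat \<bar>i\<bar> + n)" by linarith
        then show "y (i + int j) = x (i + int j)" using y(2) by blast
      qed
      then have "win y i n = win x i n" unfolding win_def by (intro map_cong) auto
      moreover have "win y i n \<in> F" using y(1) unfolding Y_def by blast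
      ultimately show ?thesis by simp
    qed
    ultimately show "x \<in> Y" unfolding Y_def by blast
  qed
  have Ysh: "shift ` Y = Y"
  proof
    show "shift ` Y \<subseteq> Y"
    proof
      fix z assume "z \<in> shift ` Y"
      then obtain y where y: "y \<in> Y" "z = shift y" by blast
      have "shift y \<in> shift ` X" using y(1) YX by blast
      then have "z \<in> X" using ss y(2) unfolding shift_space_def by simp
      moreover have "win z i n = win y (i + 1) n" for i n
      proof -
        have "z = (\<lambda>i. y (i + 1))" using y(2) unfolding shift_def by simp
        then show ?thesis unfolding win_def by (simp add: add.commute add.left_commute)
      qed
      moreover have "win z i n \<in> F" for i n
      proof -
        have "win y (i + 1) n \<in> F" using y(1) unfolding Y_def by blast
        then show ?thesis using calculation(2)[of i n] by simp
      qed
      ultimately show "z \<in> Y" unfolding Y_def by blast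
    qed
  next
    show "Y \<subseteq> shift ` Y"
    proof
      fix y assume y: "y \<in> Y"
      define y' where "y' = (\<lambda>j. y (j - 1))"
      have "y \<in> X" using y YX by blast
      then have "y' \<in> X" unfolding y'_def by (rule shift_bwd[OF ss])
      moreover have "win y' i n = win y (i - 1) n" for i n unfolding y'_def win_def
        by (simp add: algebra_simps)
      moreover have "win y' i n \<in> F" for i n
      proof -
        have "win y (i - 1) n \<in> F" using y unfolding Y_def by blast
        then show ?thesis using calculation(2)[of i n] by simp
      qed
      ultimately have "y' \<in> Y" unfolding Y_def by blast
      moreover have "shift y' = y" unfolding y'_def shift_def by simp
      ultimately show "y \<in> shift ` Y" by (metis rev_image_eqI)
    qed
  qed
  have mm: "\<And>Y'. Y' \<subseteq> X \<and> Y' \<noteq> {} \<and> closed_sh Y' \<and> shift ` Y' = Y' \<Longrightarrow> Y' = X"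
    using min unfolding minimal_shift_def by blast
  have "Y = X" by (rule mm) (use YX Yne Ycl Ysh in blast)
  moreover obtain x i where "x \<in> X" "w = win x i (length w)" using w unfolding lang_win by blast
  ultimately have "x \<in> Y" by simp
  then have "win x i (length w) \<in> F" unfolding Y_def by blast
  then have "w \<in> F" using \<open>w = win x i (length w)\<close> by simp
  then show ?thesis unfolding F_def by blast
qed

lemma tree_const:
  assumes "is_tree V adj" "\<And>u v. adj u v \<Longrightarrow> S u = S v" "u \<in> V" "v \<in> V"
  shows "S u = S v"
proof -
  have "adj\<^sup>*\<^sup>* u v" using assms(1,3,4) unfolding is_tree_def by blast
  then show ?thesis by (induction rule: rtranclp_induct) (use assms(2) in auto)
qed

lemma ext_mem: "(a, b) \<in> ext X w \<longleftrightarrow> a # w @ [b] \<in> lang X" unfolding ext_def by simp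

lemma lsys_X:
  fixes X :: "(int \<Rightarrow> 'a::finite) set"
  assumes min: "minimal_shift X" and dend: "dendric X" and loL: "linear_order rL"
    and loR: "linear_order rR" and pl: "planar X rL rR"
  shows "lsys (lang X) rL rR"
proof -
  have ss: "shift_space X" using min unfolding minimal_shift_def by blast
  have tree: "is_tree (ext_vertices X w) (ext_adj X w)" if "w \<in> lang X" for w
    using dend that unfolding dendric_def by blast
  show ?thesis
  proof (unfold_locales)
    show "\<And>u v. u @ v \<in> lang X \<Longrightarrow> u \<in> lang X" by (rule lang_app1)
    show "\<And>u v. u @ v \<in> lang X \<Longrightarrow> v \<in> lang X" by (rule lang_app2)
    show "\<And>w. w \<in> lang X \<Longrightarrow> \<exists>a. a # w \<in> lang X" by (rule lang_extL)
    show "\<And>w. w \<in> lang X \<Longrightarrow> \<exists>b. w @ [b] \<in> lang X" by (rule lang_extR)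
    show "\<And>a. [a] \<in> lang X" using ss unfolding shift_space_def by blast
    show "\<And>v w. v \<in> lang X \<Longrightarrow> w \<in> lang X \<Longrightarrow> \<exists>p. v @ p @ w \<in> lang X" using recur_X[OF min] by blast
    show "linear_order rL" "linear_order rR" by fact+
  next
    fix w SL SR a a'
    assume w: "w \<in> lang X" and h: "\<And>a b. a # w @ [b] \<in> lang X \<Longrightarrow> SL a = SR b"
      and a: "a # w \<in> lang X" "a' # w \<in> lang X"
    have "case_sum SL SR u = case_sum SL SR v" if "ext_adj X w u v" for u v
      using that h unfolding ext_adj_def ext_mem by auto
    moreover have "Inl a \<in> ext_vertices X w" "Inl a' \<in> ext_vertices X w"
      using a unfolding ext_vertices_def ext_L_def by auto
    ultimately have "case_sum SL SR (Inl a) = case_sum SL SR (Inl a')"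
      using tree_const[OF tree[OF w]] by blast
    then show "SL a = SL a'" by simp
  next
    fix w SL SR b b'
    assume w: "w \<in> lang X" and h: "\<And>a b. a # w @ [b] \<in> lang X \<Longrightarrow> SL a = SR b"
      and b: "w @ [b] \<in> lang X" "w @ [b'] \<in> lang X"
    have "case_sum SL SR u = case_sum SL SR v" if "ext_adj X w u v" for u v
      using that h unfolding ext_adj_def ext_mem by auto
    moreover have "Inr b \<in> ext_vertices X w" "Inr b' \<in> ext_vertices X w"
      using b unfolding ext_vertices_def ext_R_def by auto
    ultimately have "case_sum SL SR (Inr b) = case_sum SL SR (Inr b')"
      using tree_const[OF tree[OF w]] by blast
    then show "SR b = SR b'" by simp
  next
    fix w a1 a2 b1 b2
    assume w: "w \<in> lang X" and ne: "a1 \<noteq> a2" "b1 \<noteq> b2"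
      and e: "a1 # w @ [b1] \<in> lang X" "a2 # w @ [b1] \<in> lang X" "a1 # w @ [b2] \<in> lang X" "a2 # w @ [b2] \<in> lang X"
    define cyc where "cyc = [Inl a1, Inr b1, Inl a2, Inr b2]"
    have "3 \<le> length cyc" "distinct cyc" using ne unfolding cyc_def by auto
    moreover have "set cyc \<subseteq> ext_vertices X w"
    proof -
      have "a1 # w \<in> lang X" "a2 # w \<in> lang X" using e(1,2) lang_app1[of "_ # w" "[b1]"] by auto
      moreover have "w @ [b1] \<in> lang X" "w @ [b2] \<in> lang X" using e(1,3) lang_app2[of "[_]"] by auto
      ultimately show ?thesis unfolding cyc_def ext_vertices_def ext_L_def ext_R_def by auto
    qed
    moreover have "\<forall>i < length cyc. ext_adj X w (cyc ! i) (cyc ! ((i + 1) mod length cyc))"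
    proof (intro allI impI)
      fix i assume "i < length cyc"
      then have "i = 0 \<or> i = 1 \<or> i = 2 \<or> i = 3" unfolding cyc_def by auto
      then show "ext_adj X w (cyc ! i) (cyc ! ((i + 1) mod length cyc))"
        using e unfolding cyc_def ext_adj_def ext_mem by auto
    qed
    ultimately show False using tree[OF w] unfolding is_tree_def by blast
  next
    fix w a1 b1 a2 b2
    assume "w \<in> lang X" "a1 # w @ [b1] \<in> lang X" "a2 # w @ [b2] \<in> lang X" "(a1, a2) \<in> rL" "a1 \<noteq> a2"
    then show "(b1, b2) \<in> rR" using pl unfolding planar_def ext_mem by blast
  qed
qed



lemma rev_mem: "x \<in> rev ` L \<longleftrightarrow> rev x \<in> L"
  by (metis image_iff rev_rev_ident)

lemma lsys_mirror:
  fixes L :: "('a::finite) list set"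
  assumes "lsys L rL rR"
  shows "lsys (rev ` L) rR rL"
proof -
  interpret lsys L rL rR by fact
  show ?thesis
  proof (unfold_locales, unfold rev_mem)
    fix u v assume "rev (u @ v) \<in> L"
    then show "rev u \<in> L" using fact2[of "rev v" "rev u"] by simp
  next
    fix u v assume "rev (u @ v) \<in> L"
    then show "rev v \<in> L" using fact1[of "rev v" "rev u"] by simp
  next
    fix w assume "rev w \<in> L"
    then obtain b where "rev w @ [b] \<in> L" using extR by blast
    then show "\<exists>a. rev (a # w) \<in> L" by auto
  next
    fix w assume "rev w \<in> L"
    then obtain a where "a # rev w \<in> L" using extL by blast
    then show "\<exists>b. rev (w @ [b]) \<in> L" by auto
  next
    fix a show "rev [a] \<in> L" using letters by simp
  next
    fix v w assume "rev v \<in> L" "rev w \<in> L"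
    then obtain p where "rev w @ p @ rev v \<in> L" using recur by blast
    then show "\<exists>p. rev (v @ p @ w) \<in> L" by (intro exI[of _ "rev p"]) simp
  next
    fix w a a' and SL SR :: "'a \<Rightarrow> bool"
    assume w: "rev w \<in> L" and h: "\<And>a b. rev (a # w @ [b]) \<in> L \<Longrightarrow> SL a = SR b"
      and a: "rev (a # w) \<in> L" "rev (a' # w) \<in> L"
    have "SR b = SL a" if "b # rev w @ [a] \<in> L" for a b using h[of a b] that by simp
    then show "SL a = SL a'" using connR[OF w, of SR SL a a'] a by simp
  next
    fix w b b' and SL SR :: "'a \<Rightarrow> bool"
    assume w: "rev w \<in> L" and h: "\<And>a b. rev (a # w @ [b]) \<in> L \<Longrightarrow> SL a = SR b"
      and b: "rev (w @ [b]) \<in> L" "rev (w @ [b']) \<in> L"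
    have "SR b = SL a" if "b # rev w @ [a] \<in> L" for a b using h[of a b] that by simp
    then show "SR b = SR b'" using connL[OF w, of SR SL b b'] b by simp
  next
    fix w a1 a2 b1 b2
    assume "rev w \<in> L" "a1 \<noteq> a2" "b1 \<noteq> b2" "rev (a1 # w @ [b1]) \<in> L" "rev (a2 # w @ [b1]) \<in> L"
      "rev (a1 # w @ [b2]) \<in> L" "rev (a2 # w @ [b2]) \<in> L"
    then show False using nocyc[of "rev w" b1 b2 a1 a2] by simp
  next
    fix w a1 b1 a2 b2
    assume w: "rev w \<in> L" and e: "rev (a1 # w @ [b1]) \<in> L" "rev (a2 # w @ [b2]) \<in> L"
      and lt: "(a1, a2) \<in> rR" "a1 \<noteq> a2"
    show "(b1, b2) \<in> rL"
    proof (rule ccontr)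
      assume "(b1, b2) \<notin> rL"
      then have "(b2, b1) \<in> rL" "b2 \<noteq> b1" using lo_total[OF loL] lo_refl[OF loL] by blast+
      then have "(a2, a1) \<in> rR" using planar[of "rev w" b2 a2 b1 a1] w e by simp
      then show False using lt lo_antisym[OF loR] by blast
    qed
  next
    show "linear_order rR" "linear_order rL" using loL loR by auto
  qed
qed

lemma iso_recolor:
  assumes iso: "cgraph_iso (multi_clique I C) H" and h: "bij_betw h I' I"
    and C: "\<And>v. v \<in> I' \<Longrightarrow> C' v = C (h v)"
  shows "cgraph_iso (multi_clique I' C') H"
proof -
  obtain f where f: "bij_betw f (fst ` multi_clique I C) (fst ` H)"
    "H = (\<lambda>(c, e). (f c, e)) ` multi_clique I C"
    using iso unfolding cgraph_iso_def by blast
  have G: "multi_clique I C = (\<lambda>(c, e). (h c, e)) ` multi_clique I' C'"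
  proof
    show "multi_clique I C \<subseteq> (\<lambda>(c, e). (h c, e)) ` multi_clique I' C'"
    proof
      fix x assume "x \<in> multi_clique I C"
      then obtain c a b where x: "x = (c, {a, b})" "c \<in> I" "a \<in> C c" "b \<in> C c" "a \<noteq> b"
        unfolding multi_clique_def by blast
      obtain c' where c': "c' \<in> I'" "c = h c'" using h x(2) unfolding bij_betw_def by blast
      then have "(c', {a, b}) \<in> multi_clique I' C'" using x C[OF c'(1)] unfolding multi_clique_def by blast
      then show "x \<in> (\<lambda>(c, e). (h c, e)) ` multi_clique I' C'" using x c' by force
    qed
  next
    show "(\<lambda>(c, e). (h c, e)) ` multi_clique I' C' \<subseteq> multi_clique I C"
    proof
      fix x assume "x \<in> (\<lambda>(c, e). (h c, e)) ` multi_clique I' C'"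
      then obtain y where y: "y \<in> multi_clique I' C'" "x = (\<lambda>(c, e). (h c, e)) y" by blast
      then obtain c a b where yy: "y = (c, {a, b})" "c \<in> I'" "a \<in> C' c" "b \<in> C' c" "a \<noteq> b"
        unfolding multi_clique_def by blast
      then have x: "x = (h c, {a, b})" "c \<in> I'" "a \<in> C' c" "b \<in> C' c" "a \<noteq> b" using y by auto
      have "h c \<in> I" using h x(2) unfolding bij_betw_def by blast
      then show "x \<in> multi_clique I C" using x C[OF x(2)] unfolding multi_clique_def by blast
    qed
  qed
  have fst': "fst ` multi_clique I' C' \<subseteq> I'" unfolding multi_clique_def by auto
  have fstG: "fst ` multi_clique I C = h ` fst ` multi_clique I' C'" unfolding G by force
  have hb: "bij_betw h (fst ` multi_clique I' C') (fst ` multi_clique I C)"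
    unfolding fstG using h fst' unfolding bij_betw_def by (auto intro: inj_on_subset)
  have "bij_betw (f \<circ> h) (fst ` multi_clique I' C') (fst ` H)" using bij_betw_trans[OF hb f(1)] .
  moreover have "H = (\<lambda>(c, e). ((f \<circ> h) c, e)) ` multi_clique I' C'"
    unfolding f(2) G image_image by (simp add: case_prod_beta)
  ultimately show ?thesis unfolding cgraph_iso_def by blast
qed

theorem mainTheorem20:
  fixes X :: "(int \<Rightarrow> 'a::finite) set" and rL rR :: "'a rel"
  assumes "minimal_shift X" and "dendric X"
    and "linear_order rL" and "linear_order rR"
    and "planar X rL rR"
  shows "GL_is X (order_graph rL) \<and> GR_is X (order_graph rR)"
proof
  have ls: "lsys (lang X) rL rR" using lsys_X[OF assms] .
  interpret l: lsys "lang X" rL rR by (rule ls)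
  have "l.Ln n = lang_n X n" for n unfolding l.Ln_def lang_n_def by simp
  moreover have "l.EL = ext_L X" unfolding l.EL_def ext_L_def by (rule ext) simp
  ultimately show "GL_is X (order_graph rL)" using l.left_main unfolding GL_is_def by simp
next
  have ls: "lsys (rev ` lang X) rR rL" using lsys_mirror[OF lsys_X[OF assms]] .
  interpret r: lsys "rev ` lang X" rR rL by (rule ls)
  obtain N where N: "\<And>n. n \<ge> N \<Longrightarrow> cgraph_iso (multi_clique (r.Ln n) r.EL) (order_graph rR)"
    using r.left_main by blast
  have "cgraph_iso (multi_clique (lang_n X n) (ext_R X)) (order_graph rR)" if "n \<ge> N" for n
  proof (rule iso_recolor[OF N[OF that]])
    show "bij_betw rev (lang_n X n) (r.Ln n)"
      unfolding r.Ln_def lang_n_def bij_betw_def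
      by (auto simp: rev_mem inj_on_def image_iff intro: exI[of _ "rev _"])
  next
    fix v show "ext_R X v = r.EL (rev v)" unfolding r.EL_def ext_R_def rev_mem by simp
  qed
  then show "GR_is X (order_graph rR)" unfolding GR_is_def by blast
qed


end
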